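(* Let $\mathcal H$ be a real Hilbert space, let $f:\mathcal H\to\mathbb R$ be convex and twice continuously differentiable with $\operatorname{argmin}_{\mathcal H} f\neq\emptyset$, let $t_0>0$, $\beta\ge 0$ and $\alpha=3$. Let $u:[t_0,+\infty[\to\mathcal H$ be a classical solution of $$\dddot u(t)+\frac{10}{t}\ddot u(t)+\frac{20}{t^2}\dot u(t)+\beta\,\nabla^2 f\Big(u(t)+\tfrac14 t\dot u(t)\Big)\Big(\tfrac54\dot u(t)+\tfrac14 t\ddot u(t)\Big)+\nabla f\Big(u(t)+\tfrac14 t\dot u(t)\Big)=0 .$$ Then there exists $C>0$ such that $f\big(u(t)+\tfrac14 t\dot u(t)\big)-\inf_{\mathcal H}f\le C/t^3$ for all sufficiently large $t$.
   Context: $\nabla^2 f$ is the Hessian of $f$; $\dot u,\ddot u,\dddot u$ are time derivatives of $u$. *)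

theory Defs
  imports "HOL-Analysis.Analysis"
begin

end

theory Submission
  imports Defs
begin
lemma grad_ineq:
  fixes f :: "'a::real_inner \<Rightarrow> real"
  assumes conv: "convex_on UNIV f"
    and grad: "\<And>x. (f has_derivative (\<lambda>h. grad x \<bullet> h)) (at x)"
  shows "f y - f x \<ge> grad x \<bullet> (y - x)"
proof -
  define \<phi> where "\<phi> s = f (x + s *\<^sub>R (y - x))" for s :: real
  have cphi: "convex_on UNIV \<phi>"
  proof (rule convex_onI)
    fix t a b :: real assume t: "0 < t" "t < 1"
    have "x + ((1 - t) *\<^sub>R a + t *\<^sub>R b) *\<^sub>R (y - x) = (1 - t) *\<^sub>R (x + a *\<^sub>R (y - x)) + t *\<^sub>R (x + b *\<^sub>R (y - x))"
      by (simp add: algebra_simps)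
    then show "\<phi> ((1 - t) *\<^sub>R a + t *\<^sub>R b) \<le> (1 - t) * \<phi> a + t * \<phi> b"
      unfolding \<phi>_def using convex_onD[OF conv, of t] t by simp
  qed simp
  have "((\<lambda>s. x + s *\<^sub>R (y - x)) has_derivative (\<lambda>h. h *\<^sub>R (y - x))) (at 0)"
    by (auto intro!: derivative_eq_intros)
  from diff_chain_at[OF this grad]
  have "(\<phi> has_derivative (\<lambda>h. grad x \<bullet> (h *\<^sub>R (y - x)))) (at 0)"
    unfolding \<phi>_def o_def by simp
  then have "(\<phi> has_field_derivative (grad x \<bullet> (y - x))) (at 0)"
    unfolding has_field_derivative_def by (rule has_derivative_eq_rhs) (auto simp: fun_eq_iff)
  then have "\<phi> 1 - \<phi> 0 \<ge> (grad x \<bullet> (y - x)) * (1 - 0)"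
    by (intro convex_on_imp_above_tangent[OF cphi]) auto
  then show ?thesis unfolding \<phi>_def by simp
qed
lemma coll1: "a *\<^sub>R (y::'a::real_vector) + b *\<^sub>R y = (a + b) *\<^sub>R y"
  by (simp add: algebra_simps)
lemma coll2: "a *\<^sub>R (y::'a::real_vector) + (b *\<^sub>R y + z) = (a + b) *\<^sub>R y + z"
  by (simp add: algebra_simps)

lemma sc_aux: "(y::'a::real_vector) + c *\<^sub>R y = (1 + c) *\<^sub>R y"
  by (simp add: algebra_simps)

theorem mainTheorem3:
  fixes f :: "'a::{real_inner, complete_space} \<Rightarrow> real"
    and grad :: "'a \<Rightarrow> 'a"
    and hess :: "'a \<Rightarrow> 'a \<Rightarrow>\<^sub>L 'a"
    and u u1 u2 u3 :: "real \<Rightarrow> 'a"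
    and t0 \<beta> :: real
  assumes conv: "convex_on UNIV f"
    and grad: "\<And>x. (f has_derivative (\<lambda>h. grad x \<bullet> h)) (at x)"
    and hess: "\<And>x. (grad has_derivative blinfun_apply (hess x)) (at x)"
    and hess_cont: "continuous_on UNIV hess"
    and argmin: "\<exists>z. \<forall>x. f z \<le> f x"
    and t0: "t0 > 0"
    and beta: "\<beta> \<ge> 0"
    and d1: "\<And>t. t \<ge> t0 \<Longrightarrow> (u has_vector_derivative u1 t) (at t within {t0..})"
    and d2: "\<And>t. t \<ge> t0 \<Longrightarrow> (u1 has_vector_derivative u2 t) (at t within {t0..})"
    and d3: "\<And>t. t \<ge> t0 \<Longrightarrow> (u2 has_vector_derivative u3 t) (at t within {t0..})"
    and ode: "\<And>t. t \<ge> t0 \<Longrightarrow>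
      u3 t + (10 / t) *\<^sub>R u2 t + (20 / t\<^sup>2) *\<^sub>R u1 t
      + \<beta> *\<^sub>R blinfun_apply (hess (u t + (t / 4) *\<^sub>R u1 t)) ((5 / 4) *\<^sub>R u1 t + (t / 4) *\<^sub>R u2 t)
      + grad (u t + (t / 4) *\<^sub>R u1 t) = 0"
  shows "\<exists>C>0. \<forall>\<^sub>F t in at_top. f (u t + (t / 4) *\<^sub>R u1 t) - (INF x. f x) \<le> C / t ^ 3"
proof -
  obtain z where z: "\<And>x. f z \<le> f x" using argmin by blast
  have inf: "(INF x. f x) = f z"
    by (rule antisym) (auto intro!: cINF_lower cINF_greatest z bdd_belowI[of _ "f z"])
  define x where "x s = u s + (s / 4) *\<^sub>R u1 s" for s
  define xd where "xd s = (5 / 4) *\<^sub>R u1 s + (s / 4) *\<^sub>R u2 s" for s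
  define g where "g s = grad (x s)" for s
  define v where "v s = 3 *\<^sub>R (u s - z) + (2 * s) *\<^sub>R u1 s + (s\<^sup>2 / 4) *\<^sub>R u2 s + (\<beta> * s\<^sup>2 / 4) *\<^sub>R g s" for s
  define a where "a s = s ^ 3 / 4 - \<beta> * s\<^sup>2 / 2" for s :: real
  define E where "E s = a s * (f (x s) - f z) + (v s \<bullet> v s) / 2" for s
  have D1: "(u has_vector_derivative u1 t) (at t)" if "t > t0" for t
    using d1[of t] that at_within_interior[of t "{t0..}"] by simp
  have D2: "(u1 has_vector_derivative u2 t) (at t)" if "t > t0" for t
    using d2[of t] that at_within_interior[of t "{t0..}"] by simp
  have D3: "(u2 has_vector_derivative u3 t) (at t)" if "t > t0" for t
    using d3[of t] that at_within_interior[of t "{t0..}"] by simp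
  have Dx: "(x has_vector_derivative xd t) (at t)" if "t > t0" for t
    unfolding x_def[abs_def]
    by (rule derivative_eq_intros D1 D2 that refl | simp)+ 
      (simp add: xd_def algebra_simps sc_aux)
  have Dfx: "((\<lambda>s. f (x s)) has_real_derivative (g t \<bullet> xd t)) (at t)" if "t > t0" for t
  proof -
    have "((f \<circ> x) has_derivative (\<lambda>h. grad (x t) \<bullet> (h *\<^sub>R xd t))) (at t)"
      using diff_chain_at[OF Dx[OF that, unfolded has_vector_derivative_def] grad] by (simp add: o_def)
    then show ?thesis unfolding has_field_derivative_def o_def g_def
      by (rule has_derivative_eq_rhs) (auto simp: fun_eq_iff)
  qed
  have Dg: "(g has_vector_derivative hess (x t) (xd t)) (at t)" if "t > t0" for t
  proof -
    have "((grad \<circ> x) has_derivative (\<lambda>h. hess (x t) (h *\<^sub>R xd t))) (at t)"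
      using diff_chain_at[OF Dx[OF that, unfolded has_vector_derivative_def] hess] by (simp add: o_def)
    then show ?thesis unfolding has_vector_derivative_def o_def g_def
      by (rule has_derivative_eq_rhs) (auto simp: fun_eq_iff blinfun.scaleR_right)
  qed
  have Dv: "(v has_vector_derivative (\<beta> * t / 2 - t\<^sup>2 / 4) *\<^sub>R g t) (at t)" if "t > t0" for t
  proof -
    have tp: "t > 0" using that t0 by simp
    have ode': "(t\<^sup>2 / 4) *\<^sub>R (u3 t + (10 / t) *\<^sub>R u2 t + (20 / t\<^sup>2) *\<^sub>R u1 t
      + \<beta> *\<^sub>R blinfun_apply (hess (x t)) (xd t) + g t) = 0"
      using ode[of t] that unfolding x_def xd_def g_def by simp
    have cf: "t * 2 + t / 2 = 5 * t\<^sup>2 / (t * 2)" using tp by (simp add: field_simps power2_eq_square)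
    have ode2: "5 *\<^sub>R u1 t + ((t * 2 + t / 2) *\<^sub>R u2 t + ((t\<^sup>2 / 4) *\<^sub>R g t + ((t\<^sup>2 / 4) *\<^sub>R u3 t
       + (\<beta> * t\<^sup>2 / 4) *\<^sub>R blinfun_apply (hess (x t)) (xd t)))) = 0"
      unfolding cf using ode' tp by (simp add: algebra_simps)
    show ?thesis unfolding v_def[abs_def]
      by (rule derivative_eq_intros D1 D2 D3 Dg that refl | simp)+
        (use ode2 in \<open>simp add: algebra_simps; simp only: coll1 coll2; simp\<close>)
  qed
  define Ed where "Ed t = (3 * t\<^sup>2 / 4 - \<beta> * t) * (f (x t) - f z) + a t * (g t \<bullet> xd t)
      + v t \<bullet> ((\<beta> * t / 2 - t\<^sup>2 / 4) *\<^sub>R g t)" for t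
  have Dvv: "((\<lambda>s. v s \<bullet> v s) has_real_derivative 2 * (v t \<bullet> ((\<beta> * t / 2 - t\<^sup>2 / 4) *\<^sub>R g t))) (at t)"
    if "t > t0" for t
  proof -
    have "((\<lambda>s. v s \<bullet> v s) has_derivative (\<lambda>h. v t \<bullet> (h *\<^sub>R ((\<beta> * t / 2 - t\<^sup>2 / 4) *\<^sub>R g t))
         + (h *\<^sub>R ((\<beta> * t / 2 - t\<^sup>2 / 4) *\<^sub>R g t)) \<bullet> v t)) (at t)"
      using has_derivative_inner[OF Dv[OF that, unfolded has_vector_derivative_def] Dv[OF that, unfolded has_vector_derivative_def]] .
    then show ?thesis unfolding has_field_derivative_def
      by (rule has_derivative_eq_rhs) (auto simp: fun_eq_iff inner_commute algebra_simps)
  qed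
  have DE: "(E has_real_derivative Ed t) (at t)" if "t > t0" for t
    unfolding E_def[abs_def] a_def
    by (rule derivative_eq_intros Dfx Dvv that refl | simp)+
      (simp add: Ed_def a_def algebra_simps power2_eq_square power3_eq_cube)
  have vid: "v t = 3 *\<^sub>R (x t - z) + t *\<^sub>R xd t + (\<beta> * t\<^sup>2 / 4) *\<^sub>R g t" for t
  proof -
    have e1: "(2 * t) *\<^sub>R u1 t = (3 * (t / 4)) *\<^sub>R u1 t + (t * (5 / 4)) *\<^sub>R u1 t"
      by (subst scaleR_add_left[symmetric]) simp
    have e2: "(t\<^sup>2 / 4) *\<^sub>R u2 t = (t * (t / 4)) *\<^sub>R u2 t"
      by (simp add: power2_eq_square)
    show ?thesis unfolding v_def e1 e2 x_def xd_def
      by (simp add: algebra_simps)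
  qed
  define T where "T = max (t0 + 1) (4 * \<beta> + 1)"
  have ineq: "Ed t \<le> (4 * \<beta> / t\<^sup>2) * E t" if "t \<ge> T" for t
  proof -
    have tt: "t > t0" "t \<ge> 4 * \<beta> + 1" "t > 0" using that t0 beta unfolding T_def by auto
    define P where "P = f (x t) - f z"
    define Q where "Q = (x t - z) \<bullet> g t"
    define N where "N = g t \<bullet> g t"
    define k where "k = t\<^sup>2 / 4 - \<beta> * t / 2"
    have P0: "P \<ge> 0" using z unfolding P_def by simp
    have QP: "Q \<ge> P" using grad_ineq[OF conv grad, where y=z and x="x t"] unfolding P_def Q_def g_def
      by (simp add: inner_commute inner_diff_left inner_diff_right)
    have N0: "N \<ge> 0" unfolding N_def by simp
    have "k = t * (t / 4 - \<beta> / 2)" unfolding k_def by (simp add: algebra_simps power2_eq_square)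
    moreover have "t / 4 - \<beta> / 2 \<ge> 0" using tt beta by simp
    ultimately have k0: "k \<ge> 0" using tt by simp
    have c0: "\<beta> * t\<^sup>2 / 4 \<ge> 0" using beta by simp
    have a_eq: "a t = k * t" unfolding a_def k_def by (simp add: algebra_simps power2_eq_square power3_eq_cube)
    have Ed_eq: "Ed t = (3 * t\<^sup>2 / 4 - \<beta> * t) * P - 3 * k * Q - k * (\<beta> * t\<^sup>2 / 4) * N"
      unfolding Ed_def a_eq P_def Q_def N_def vid k_def
      by (simp add: inner_add_left inner_diff_left inner_commute algebra_simps diff_divide_distrib)
    have "k * Q \<ge> k * P" using QP k0 by (rule mult_left_mono)
    moreover have "k * (\<beta> * t\<^sup>2 / 4) * N \<ge> 0" using k0 c0 N0 by simp
    ultimately have "Ed t \<le> (3 * t\<^sup>2 / 4 - \<beta> * t - 3 * k) * P" unfolding Ed_eq by (simp add: algebra_simps)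
    also have "\<dots> = (\<beta> * t / 2) * P" unfolding k_def by (simp add: algebra_simps)
    also have "\<dots> \<le> (4 * \<beta> / t\<^sup>2) * (a t * P)"
    proof -
      have "(4 * \<beta> / t\<^sup>2) * (a t * P) = (\<beta> * (t - 2 * \<beta>)) * P"
        using tt unfolding a_def by (simp add: field_simps power2_eq_square power3_eq_cube)
      moreover have "\<beta> * (t / 2) \<le> \<beta> * (t - 2 * \<beta>)" using tt beta
        by (intro mult_left_mono) auto
      ultimately show ?thesis using mult_right_mono[OF _ P0, of "\<beta> * (t / 2)" "\<beta> * (t - 2 * \<beta>)"]
        by simp
    qed
    also have "\<dots> \<le> (4 * \<beta> / t\<^sup>2) * E t"
      unfolding E_def P_def using beta by (intro mult_left_mono) auto
    finally show ?thesis .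
  qed
  have a_ge: "a t \<ge> t ^ 3 / 8" if "t \<ge> T" for t
  proof -
    have tt: "t > 0" "t \<ge> 4 * \<beta>" using that t0 beta unfolding T_def by auto
    have "a t - t ^ 3 / 8 = t\<^sup>2 * (t / 8 - \<beta> / 2)" unfolding a_def
      by (simp add: algebra_simps power2_eq_square power3_eq_cube)
    moreover have "t\<^sup>2 * (t / 8 - \<beta> / 2) \<ge> 0" using tt by simp
    ultimately show ?thesis by simp
  qed
  have E0: "E t \<ge> a t * (f (x t) - f z)" "a t * (f (x t) - f z) \<ge> 0" if "t \<ge> T" for t
  proof -
    have "t > 0" using that t0 beta unfolding T_def by auto
    then have "a t \<ge> 0" using a_ge[OF that] zero_less_power[of t 3] by linarith
    then show "a t * (f (x t) - f z) \<ge> 0" using z by simp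
    show "E t \<ge> a t * (f (x t) - f z)" unfolding E_def by simp
  qed
  define G where "G t = exp (4 * \<beta> / t) * E t" for t
  have DG: "\<exists>y. (G has_real_derivative y) (at t) \<and> y \<le> 0" if "T \<le> t" for t
  proof -
    have tt: "t > t0" "t > 0" using that t0 beta unfolding T_def by auto
    have "(G has_real_derivative exp (4 * \<beta> / t) * (Ed t - (4 * \<beta> / t\<^sup>2) * E t)) (at t)"
    proof -
      have d: "((\<lambda>s. 4 * \<beta> / s) has_real_derivative - (4 * \<beta> / t\<^sup>2)) (at t)"
        using tt by (auto intro!: derivative_eq_intros simp: power2_eq_square)
      from DERIV_mult[OF DERIV_fun_exp[OF d] DE[OF tt(1)]]
      show ?thesis by (simp add: G_def[abs_def] algebra_simps)
    qed
    moreover have "exp (4 * \<beta> / t) * (Ed t - (4 * \<beta> / t\<^sup>2) * E t) \<le> 0"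
      using ineq[OF that] by (simp add: mult_nonneg_nonpos)
    ultimately show ?thesis by blast
  qed
  define M where "M = G T"
  have M0: "M \<ge> 0" unfolding M_def G_def using E0[of T] by simp
  have bound: "f (x t) - f z \<le> (8 * M + 1) / t ^ 3" if "t \<ge> T" for t
  proof -
    have tt: "t > 0" using that t0 beta unfolding T_def by auto
    have "G t \<le> M" unfolding M_def using DERIV_nonpos_imp_nonincreasing[of T t G] DG that by auto
    moreover have "E t \<le> G t"
    proof -
      have "1 \<le> exp (4 * \<beta> / t)" using beta tt by simp
      then show ?thesis unfolding G_def using E0[OF that] mult_right_mono[of 1 "exp (4 * \<beta> / t)" "E t"]
        by linarith
    qed
    ultimately have aP: "a t * (f (x t) - f z) \<le> M" using E0[OF that] by linarith
    have P0: "f (x t) - f z \<ge> 0" using z by simp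
    have "t ^ 3 / 8 * (f (x t) - f z) \<le> a t * (f (x t) - f z)"
      using a_ge[OF that] P0 by (rule mult_right_mono)
    with aP have "t ^ 3 * (f (x t) - f z) \<le> 8 * M + 1" by linarith
    then show ?thesis using tt by (simp add: field_simps)
  qed
  show ?thesis
  proof (intro exI[of _ "8 * M + 1"] conjI)
    show "8 * M + 1 > 0" using M0 by simp
    show "\<forall>\<^sub>F t in at_top. f (u t + (t / 4) *\<^sub>R u1 t) - (INF x. f x) \<le> (8 * M + 1) / t ^ 3"
      using eventually_ge_at_top[of T] by eventually_elim (use bound in \<open>simp add: inf x_def\<close>)
  qed
qed
end
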